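(* Let $X$ be a compact polyhedron such that $X\times\mathbb{N}^+$ embeds in $\mathbb{R}^n$, and let $I=[0,1]$. Then the deleted product $\widetilde{X\times I}$ admits a $\mathbb{Z}/2$-equivariant map to $S^{n-1}$.
   Context: $\mathbb{N}^+$ denotes the one-point compactification of the countable discrete space $\mathbb{N}$. For a space $Y$, its deleted product is $\tilde Y:=Y\times Y\setminus\Delta_Y$, where $\Delta_Y=\{(y,y):y\in Y\}$; $\mathbb{Z}/2$ acts on $\tilde Y$ by exchanging the two factors, $(p,q)\mapsto(q,p)$, and on $S^{n-1}$ by the antipodal involution $x\mapsto -x$. A $\mathbb{Z}/2$-map is a continuous map commuting with these involutions. *)

theory Defs
  imports "HOL-Analysis.Analysis"
begin

definition compact_polyhedron :: "'a::euclidean_space set \<Rightarrow> bool" where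
  "compact_polyhedron X \<longleftrightarrow> (\<exists>\<T>. finite \<T> \<and> (\<forall>S\<in>\<T>. polytope S) \<and> X = \<Union>\<T>)"

text \<open>A model of the one-point compactification of the discrete space of naturals:
  the subspace {0} \<union> {1/(k+1)} of the reals.\<close>
definition Nplus :: "real set" where
  "Nplus = insert 0 (range (\<lambda>k::nat. 1 / (real k + 1)))"

definition deleted_product :: "'a set \<Rightarrow> ('a \<times> 'a) set" where
  "deleted_product Y = {(p, q). p \<in> Y \<and> q \<in> Y \<and> p \<noteq> q}"

definition Z2_map_to_sphere :: "'a::topological_space set \<Rightarrow> ('a \<times> 'a \<Rightarrow> 'b::euclidean_space) \<Rightarrow> bool" where
  "Z2_map_to_sphere Y g \<longleftrightarrow>
     continuous_on (deleted_product Y) g \<and>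
     g ` deleted_product Y \<subseteq> sphere 0 1 \<and>
     (\<forall>p q. (p, q) \<in> deleted_product Y \<longrightarrow> g (q, p) = - g (p, q))"

end

theory Submission
  imports Defs
begin

lemma bary_unique:
  fixes C :: "'b::euclidean_space set"
  assumes "finite C" "\<not> affine_dependent C"
    and "\<forall>c. c \<notin> C \<longrightarrow> w1 c = 0" "\<forall>c. c \<notin> C \<longrightarrow> w2 c = 0"
    and "sum w1 C = 1" "sum w2 C = 1"
    and "(\<Sum>c\<in>C. w1 c *\<^sub>R c) = (\<Sum>c\<in>C. w2 c *\<^sub>R c)"
  shows "w1 = w2"
proof -
  have s0: "sum (\<lambda>c. w1 c - w2 c) C = 0" using assms(5,6) by (simp add: sum_subtractf)
  have v0: "(\<Sum>c\<in>C. (w1 c - w2 c) *\<^sub>R c) = 0"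
    using assms(7) by (simp add: scaleR_diff_left sum_subtractf)
  have "\<forall>v\<in>C. w1 v - w2 v = 0"
    using assms(2) s0 v0 affine_dependent_explicit_finite[OF assms(1)] by blast
  then show ?thesis using assms(3,4) by (metis eq_iff_diff_eq_0 ext)
qed

lemma bary_coord_cont:
  fixes C :: "'b::euclidean_space set"
  assumes "finite C" "\<not> affine_dependent C" "v \<in> C"
  shows "\<exists>\<beta>. continuous_on UNIV \<beta> \<and> (\<forall>w. sum w C = 1 \<longrightarrow> \<beta> (\<Sum>c\<in>C. w c *\<^sub>R c) = w v)"
proof (cases "C = {v}")
  case True
  then show ?thesis by (intro exI[of _ "\<lambda>_. 1"]) auto
next
  case False
  then obtain c0 where c0: "c0 \<in> C" "c0 \<noteq> v" using assms(3) by blast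
  define C' where "C' = C - {c0}"
  have CC: "C = insert c0 C'" "c0 \<notin> C'" using c0 by (auto simp: C'_def)
  have vC': "v \<in> C'" using c0 assms(3) by (auto simp: C'_def)
  have ind: "independent ((\<lambda>x. - c0 + x) ` C')"
    using assms(2) affine_dependent_iff_dependent[OF CC(2)] CC(1) by simp
  obtain g :: "'b \<Rightarrow> real" where g: "linear g" "\<forall>x\<in>(\<lambda>x. - c0 + x) ` C'. g x = (if x = - c0 + v then 1 else 0)"
    using real_vector.linear_independent_extend[OF ind, of "\<lambda>x. if x = - c0 + v then (1::real) else 0"] by (elim exE conjE) (rule that)
  have gc: "g (c - c0) = (if c = v then 1 else 0)" if "c \<in> C'" for c
    using g(2) that by (auto simp: algebra_simps)
  have fin': "finite C'" using assms(1) by (simp add: C'_def)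
  show ?thesis
  proof (intro exI[of _ "\<lambda>x. g (x - c0)"] conjI allI impI)
    show "continuous_on UNIV (\<lambda>x. g (x - c0))"
      by (rule linear_continuous_on_compose[OF _ g(1)]) (intro continuous_intros)
  next
    fix w :: "'b \<Rightarrow> real" assume sw: "sum w C = 1"
    have "(\<Sum>c\<in>C. w c *\<^sub>R c0) = (sum w C) *\<^sub>R c0" by (rule scaleR_sum_left[symmetric])
    then have "(\<Sum>c\<in>C. w c *\<^sub>R c0) = c0" using sw by simp
    then have "(\<Sum>c\<in>C. w c *\<^sub>R c) - c0 = (\<Sum>c\<in>C. w c *\<^sub>R c) - (\<Sum>c\<in>C. w c *\<^sub>R c0)"
      by simp
    also have "\<dots> = (\<Sum>c\<in>C. w c *\<^sub>R (c - c0))"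
      by (simp add: sum_subtractf scaleR_diff_right)
    also have "\<dots> = (\<Sum>c\<in>C'. w c *\<^sub>R (c - c0))"
      using CC fin' by simp
    finally have eq: "(\<Sum>c\<in>C. w c *\<^sub>R c) - c0 = (\<Sum>c\<in>C'. w c *\<^sub>R (c - c0))" .
    have "g (\<Sum>c\<in>C'. w c *\<^sub>R (c - c0)) = (\<Sum>c\<in>C'. w c * g (c - c0))"
      using g(1) by (simp add: linear_sum linear_scale)
    also have "\<dots> = (\<Sum>c\<in>C'. if c = v then w c else 0)"
      by (intro sum.cong) (auto simp: gc)
    also have "\<dots> = w v" using vC' fin' by (simp add: sum.delta)
    finally show "g ((\<Sum>c\<in>C. w c *\<^sub>R c) - c0) = w v" using eq by simp
  qed
qed


definition verts :: "'b::euclidean_space set \<Rightarrow> 'b set" where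
  "verts S = {v. v extreme_point_of S}"

definition bwP :: "'b::euclidean_space set \<Rightarrow> 'b \<Rightarrow> ('b \<Rightarrow> real) \<Rightarrow> bool" where
  "bwP S x w \<longleftrightarrow> (\<forall>c. c \<notin> verts S \<longrightarrow> w c = 0) \<and> (\<forall>c. 0 \<le> w c) \<and> sum w (verts S) = 1
      \<and> (\<Sum>c\<in>verts S. w c *\<^sub>R c) = x"

definition bw :: "'b::euclidean_space set \<Rightarrow> 'b \<Rightarrow> 'b \<Rightarrow> real" where
  "bw S x = (SOME w. bwP S x w)"

lemma simplexT:
  fixes T :: "'b::euclidean_space set set"
  assumes "simplicial_complex T" "S \<in> T"
  shows "\<not> affine_dependent (verts S) \<and> finite (verts S) \<and> S = convex hull (verts S)"
proof -
  obtain n where "n simplex S" using assms unfolding simplicial_complex_def by blast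
  then obtain C where C: "\<not> affine_dependent C" "S = convex hull C" unfolding simplex_def by blast
  have "verts S = C" using C extreme_point_of_convex_hull_affine_independent[OF C(1)]
    by (auto simp: verts_def)
  then show ?thesis using C aff_independent_finite by blast
qed

lemma verts_hull:
  fixes C :: "'b::euclidean_space set"
  assumes "\<not> affine_dependent C"
  shows "verts (convex hull C) = C"
  using extreme_point_of_convex_hull_affine_independent[OF assms] by (auto simp: verts_def)

lemma bw_exists:
  fixes T :: "'b::euclidean_space set set"
  assumes "simplicial_complex T" "S \<in> T" "x \<in> S"
  shows "bwP S x (bw S x)"
proof -
  have st: "\<not> affine_dependent (verts S)" "finite (verts S)" "S = convex hull (verts S)"
    using simplexT[OF assms(1,2)] by auto
  then obtain u where u: "\<forall>c\<in>verts S. 0 \<le> u c" "sum u (verts S) = 1" "(\<Sum>c\<in>verts S. u c *\<^sub>R c) = x"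
    using assms(3) convex_hull_finite[OF st(2)] by blast
  define w where "w c = (if c \<in> verts S then u c else 0)" for c
  have "bwP S x w"
    unfolding bwP_def using u by (auto simp: w_def)
  then show ?thesis unfolding bw_def using someI[where P="bwP S x"] by blast
qed

lemma bw_eq:
  fixes T :: "'b::euclidean_space set set"
  assumes "simplicial_complex T" "S \<in> T" "x \<in> S" "bwP S x w"
  shows "bw S x = w"
proof -
  have st: "\<not> affine_dependent (verts S)" "finite (verts S)"
    using simplexT[OF assms(1,2)] by auto
  have b: "bwP S x (bw S x)" by (rule bw_exists[OF assms(1-3)])
  show ?thesis
    by (rule bary_unique[OF st(2) st(1)]) (use b assms(4) in \<open>auto simp: bwP_def\<close>)
qed

lemma inter_hull:
  fixes T :: "'b::euclidean_space set set"
  assumes "simplicial_complex T" "S \<in> T" "S' \<in> T"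
  shows "\<exists>D. D \<subseteq> verts S \<and> D \<subseteq> verts S' \<and> S \<inter> S' = convex hull D"
proof -
  have st: "\<not> affine_dependent (verts S)" "S = convex hull (verts S)"
    using simplexT[OF assms(1,2)] by auto
  have st': "\<not> affine_dependent (verts S')" "S' = convex hull (verts S')"
    using simplexT[OF assms(1,3)] by auto
  have f1: "S \<inter> S' face_of S" and f2: "S' \<inter> S face_of S'"
    using assms unfolding simplicial_complex_def by blast+
  obtain D where D: "D \<subseteq> verts S" "S \<inter> S' = convex hull D"
    using f1 face_of_convex_hull_affine_independent[OF st(1)] st(2) by metis
  obtain D' where D': "D' \<subseteq> verts S'" "S \<inter> S' = convex hull D'"
    using f2 face_of_convex_hull_affine_independent[OF st'(1)] st'(2) by (metis Int_commute)
  have "D = D'"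
  proof -
    have "verts (convex hull D) = D"
      by (rule verts_hull) (rule affine_independent_subset[OF st(1) D(1)])
    moreover have "verts (convex hull D') = D'"
      by (rule verts_hull) (rule affine_independent_subset[OF st'(1) D'(1)])
    ultimately show ?thesis using D(2) D'(2) by simp
  qed
  then show ?thesis using D D' by blast
qed

lemma bw_consistent:
  fixes T :: "'b::euclidean_space set set"
  assumes "simplicial_complex T" "S \<in> T" "S' \<in> T" "x \<in> S" "x \<in> S'"
  shows "bw S x = bw S' x"
proof -
  obtain D where D: "D \<subseteq> verts S" "D \<subseteq> verts S'" "S \<inter> S' = convex hull D"
    using inter_hull[OF assms(1-3)] by blast
  have fS: "finite (verts S)" using simplexT[OF assms(1,2)] by auto
  have fS': "finite (verts S')" using simplexT[OF assms(1,3)] by auto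
  have fD: "finite D" using D(1) fS finite_subset by blast
  obtain u where u: "\<forall>c\<in>D. 0 \<le> u c" "sum u D = 1" "(\<Sum>c\<in>D. u c *\<^sub>R c) = x"
    using assms(4,5) D(3) convex_hull_finite[OF fD] by blast
  define w where "w c = (if c \<in> D then u c else 0)" for c
  have sD: "sum w D = 1" "(\<Sum>c\<in>D. w c *\<^sub>R c) = x" using u by (simp_all add: w_def)
  have P: "bwP R x w" if "D \<subseteq> verts R" "finite (verts R)" for R
  proof -
    have "sum w (verts R) = sum w D"
      by (rule sum.mono_neutral_right) (use that in \<open>auto simp: w_def\<close>)
    moreover have "(\<Sum>c\<in>verts R. w c *\<^sub>R c) = (\<Sum>c\<in>D. w c *\<^sub>R c)"
      by (rule sum.mono_neutral_right) (use that in \<open>auto simp: w_def\<close>)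
    ultimately show ?thesis unfolding bwP_def using sD u that by (auto simp: w_def)
  qed
  have "bw S x = w" by (rule bw_eq[OF assms(1,2,4) P[OF D(1) fS]])
  moreover have "bw S' x = w" by (rule bw_eq[OF assms(1,3,5) P[OF D(2) fS']])
  ultimately show ?thesis by simp
qed

definition VV :: "'b::euclidean_space set set \<Rightarrow> 'b set" where
  "VV T = \<Union>(verts ` T)"

definition phi :: "'b::euclidean_space set set \<Rightarrow> 'b \<Rightarrow> 'b \<Rightarrow> real" where
  "phi T x = bw (SOME S. S \<in> T \<and> x \<in> S) x"

lemma phi_eq:
  fixes T :: "'b::euclidean_space set set"
  assumes "simplicial_complex T" "S \<in> T" "x \<in> S"
  shows "phi T x = bw S x"
proof -
  define S0 where "S0 = (SOME S. S \<in> T \<and> x \<in> S)"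
  have "S0 \<in> T \<and> x \<in> S0" unfolding S0_def using assms(2,3) someI[where P="\<lambda>S. S \<in> T \<and> x \<in> S"] by blast
  then show ?thesis unfolding phi_def S0_def[symmetric] using bw_consistent[OF assms(1) _ assms(2) _ assms(3)] by blast
qed

lemma finite_VV:
  fixes T :: "'b::euclidean_space set set"
  assumes "simplicial_complex T"
  shows "finite (VV T)"
  using assms simplexT[OF assms] unfolding VV_def simplicial_complex_def by auto

lemma phi_props:
  fixes T :: "'b::euclidean_space set set"
  assumes "simplicial_complex T" "x \<in> \<Union>T"
  shows "(\<forall>v. 0 \<le> phi T x v) \<and> (\<forall>v. v \<notin> VV T \<longrightarrow> phi T x v = 0) \<and> sum (phi T x) (VV T) = 1
         \<and> (\<Sum>v\<in>VV T. phi T x v *\<^sub>R v) = x"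
proof -
  obtain S where S: "S \<in> T" "x \<in> S" using assms(2) by blast
  have e: "phi T x = bw S x" by (rule phi_eq[OF assms(1) S])
  have b: "bwP S x (bw S x)" by (rule bw_exists[OF assms(1) S])
  have sub: "verts S \<subseteq> VV T" using S(1) by (auto simp: VV_def)
  have fin: "finite (VV T)" by (rule finite_VV[OF assms(1)])
  have z: "\<forall>v\<in>VV T - verts S. bw S x v = 0" using b by (auto simp: bwP_def)
  have "sum (bw S x) (VV T) = sum (bw S x) (verts S)"
    by (rule sum.mono_neutral_right[OF fin sub z])
  moreover have "(\<Sum>v\<in>VV T. bw S x v *\<^sub>R v) = (\<Sum>v\<in>verts S. bw S x v *\<^sub>R v)"
    by (rule sum.mono_neutral_right[OF fin sub]) (use z in auto)
  ultimately show ?thesis using b sub unfolding e bwP_def by auto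
qed

lemma phi_cont:
  fixes T :: "'b::euclidean_space set set"
  assumes "simplicial_complex T"
  shows "continuous_on (\<Union>T) (\<lambda>x. phi T x v)"
proof -
  have "continuous_on (\<Union>S\<in>T. S) (\<lambda>x. phi T x v)"
  proof (rule continuous_on_closed_Union)
    show "finite T" using assms by (simp add: simplicial_complex_def)
  next
    fix S assume S: "S \<in> T"
    have st: "\<not> affine_dependent (verts S)" "finite (verts S)" "S = convex hull (verts S)"
      using simplexT[OF assms S] by auto
    show "closed S" using st by (metis compact_convex_hull finite_imp_compact compact_imp_closed)
    show "continuous_on S (\<lambda>x. phi T x v)"
    proof (cases "v \<in> verts S")
      case True
      obtain \<beta> where \<beta>: "continuous_on UNIV \<beta>" "\<forall>w. sum w (verts S) = 1 \<longrightarrow> \<beta> (\<Sum>c\<in>verts S. w c *\<^sub>R c) = w v"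
        using bary_coord_cont[OF st(2) st(1) True] by blast
      have "\<beta> x = phi T x v" if "x \<in> S" for x
      proof -
        have b: "bwP S x (bw S x)" by (rule bw_exists[OF assms S that])
        then have "\<beta> x = bw S x v" using \<beta>(2) unfolding bwP_def by metis
        then show ?thesis using phi_eq[OF assms S that] by simp
      qed
      then show ?thesis using continuous_on_subset[OF \<beta>(1)] continuous_on_cong by (metis subset_UNIV)
    next
      case False
      have "phi T x v = 0" if "x \<in> S" for x
        using bw_exists[OF assms S that] phi_eq[OF assms S that] False unfolding bwP_def by auto
      then show ?thesis using continuous_on_const continuous_on_cong by (metis (no_types, lifting))
    qed
  qed
  then show ?thesis by simp
qed

definition mm :: "'b::euclidean_space set set \<Rightarrow> 'b \<Rightarrow> 'b \<Rightarrow> 'b \<Rightarrow> real" where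
  "mm T x y v = min (phi T x v) (phi T y v)"

definition mu :: "'b::euclidean_space set set \<Rightarrow> 'b \<Rightarrow> 'b \<Rightarrow> real" where
  "mu T x y = (\<Sum>v\<in>VV T. mm T x y v)"

definition rr :: "'b::euclidean_space set set \<Rightarrow> 'b \<times> 'b \<Rightarrow> 'b" where
  "rr T z = (\<Sum>v\<in>VV T. ((phi T (fst z) v - mm T (fst z) (snd z) v) / (1 - mu T (fst z) (snd z))) *\<^sub>R v)"

lemma mu_lt1:
  fixes T :: "'b::euclidean_space set set"
  assumes "simplicial_complex T" "x \<in> \<Union>T" "y \<in> \<Union>T" "x \<noteq> y"
  shows "mu T x y < 1"
proof -
  have px: "(\<forall>v. 0 \<le> phi T x v) \<and> (\<forall>v. v \<notin> VV T \<longrightarrow> phi T x v = 0) \<and> sum (phi T x) (VV T) = 1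
         \<and> (\<Sum>v\<in>VV T. phi T x v *\<^sub>R v) = x" by (rule phi_props[OF assms(1,2)])
  have py: "(\<forall>v. 0 \<le> phi T y v) \<and> (\<forall>v. v \<notin> VV T \<longrightarrow> phi T y v = 0) \<and> sum (phi T y) (VV T) = 1
         \<and> (\<Sum>v\<in>VV T. phi T y v *\<^sub>R v) = y" by (rule phi_props[OF assms(1,3)])
  have fin: "finite (VV T)" by (rule finite_VV[OF assms(1)])
  have le: "mu T x y \<le> 1"
  proof -
    have "mu T x y \<le> sum (phi T x) (VV T)" unfolding mu_def mm_def by (rule sum_mono) simp
    then show ?thesis using px by simp
  qed
  have "mu T x y \<noteq> 1"
  proof
    assume m1: "mu T x y = 1"
    have ex: "\<forall>v\<in>VV T. phi T x v - mm T x y v = 0"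
    proof -
      have "(\<Sum>v\<in>VV T. phi T x v - mm T x y v) = 0"
        using px m1 by (simp add: sum_subtractf mu_def)
      moreover have "\<forall>v\<in>VV T. 0 \<le> phi T x v - mm T x y v" by (simp add: mm_def)
      ultimately show ?thesis using sum_nonneg_eq_0_iff[OF fin, of "\<lambda>v. phi T x v - mm T x y v"] by simp
    qed
    have ey: "\<forall>v\<in>VV T. phi T y v - mm T x y v = 0"
    proof -
      have "(\<Sum>v\<in>VV T. phi T y v - mm T x y v) = 0"
        using py m1 by (simp add: sum_subtractf mu_def)
      moreover have "\<forall>v\<in>VV T. 0 \<le> phi T y v - mm T x y v" by (simp add: mm_def)
      ultimately show ?thesis using sum_nonneg_eq_0_iff[OF fin, of "\<lambda>v. phi T y v - mm T x y v"] by simp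
    qed
    have "\<forall>v\<in>VV T. phi T x v = phi T y v" using ex ey by auto
    then have "(\<Sum>v\<in>VV T. phi T x v *\<^sub>R v) = (\<Sum>v\<in>VV T. phi T y v *\<^sub>R v)"
      by (intro sum.cong) auto
    then show False using px py assms(4) by simp
  qed
  then show ?thesis using le by simp
qed

lemma rr_cont:
  fixes T :: "'b::euclidean_space set set"
  assumes "simplicial_complex T"
  shows "continuous_on (deleted_product (\<Union>T)) (rr T)"
proof -
  let ?D = "deleted_product (\<Union>T)"
  have cf: "continuous_on ?D (\<lambda>z. phi T (fst z) v)" for v
    by (rule continuous_on_compose2[OF phi_cont[OF assms] continuous_on_fst])
      (auto simp: deleted_product_def)
  have cs: "continuous_on ?D (\<lambda>z. phi T (snd z) v)" for v
    by (rule continuous_on_compose2[OF phi_cont[OF assms] continuous_on_snd])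
      (auto simp: deleted_product_def)
  have cm: "continuous_on ?D (\<lambda>z. mm T (fst z) (snd z) v)" for v
    unfolding mm_def by (intro continuous_on_min cf cs)
  have cmu: "continuous_on ?D (\<lambda>z. mu T (fst z) (snd z))"
    unfolding mu_def by (intro continuous_on_sum cm)
  have nz: "\<forall>z\<in>?D. 1 - mu T (fst z) (snd z) \<noteq> 0"
    using mu_lt1[OF assms] by (fastforce simp: deleted_product_def)
  show ?thesis unfolding rr_def
    by (intro continuous_on_sum continuous_on_scaleR continuous_on_divide continuous_on_diff
        continuous_on_const cf cm cmu) (use nz in auto)
qed

lemma sc_face:
  assumes "simplicial_complex T" "S \<in> T" "F face_of S"
  shows "F \<in> T"
proof -
  have "\<forall>F S. S \<in> T \<and> F face_of S \<longrightarrow> F \<in> T" using assms(1) by (simp add: simplicial_complex_def)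
  then show ?thesis using assms(2,3) by blast
qed

lemma rr_in:
  fixes T :: "'b::euclidean_space set set"
  assumes "simplicial_complex T" "x \<in> \<Union>T" "y \<in> \<Union>T" "x \<noteq> y"
  shows "convex hull {v \<in> VV T. phi T y v < phi T x v} \<in> T \<and>
         rr T (x,y) \<in> convex hull {v \<in> VV T. phi T y v < phi T x v} \<and>
         \<not> affine_dependent {v \<in> VV T. phi T y v < phi T x v}"
proof -
  define A where "A = {v \<in> VV T. phi T y v < phi T x v}"
  obtain S where S: "S \<in> T" "x \<in> S" using assms(2) by blast
  have st: "\<not> affine_dependent (verts S)" "finite (verts S)" "S = convex hull (verts S)"
    using simplexT[OF assms(1) S(1)] by auto
  have py: "\<forall>v. 0 \<le> phi T y v" using phi_props[OF assms(1,3)] by blast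
  have px: "(\<forall>v. 0 \<le> phi T x v) \<and> (\<forall>v. v \<notin> VV T \<longrightarrow> phi T x v = 0) \<and> sum (phi T x) (VV T) = 1
         \<and> (\<Sum>v\<in>VV T. phi T x v *\<^sub>R v) = x" by (rule phi_props[OF assms(1,2)])
  have b: "bwP S x (bw S x)" by (rule bw_exists[OF assms(1) S])
  have AS: "A \<subseteq> verts S"
  proof
    fix v assume "v \<in> A"
    then have "phi T x v \<noteq> 0" using py unfolding A_def by (metis mem_Collect_eq not_less order_refl)
    then show "v \<in> verts S" using b phi_eq[OF assms(1) S] unfolding bwP_def by auto
  qed
  have Aind: "\<not> affine_dependent A" by (rule affine_independent_subset[OF st(1) AS])
  have fin: "finite (VV T)" by (rule finite_VV[OF assms(1)])
  have finA: "finite A" unfolding A_def using fin by simp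
  have "\<exists>c. c \<subseteq> verts S \<and> convex hull A = convex hull c" using AS by blast
  then have "convex hull A face_of convex hull (verts S)"
    by (subst face_of_convex_hull_affine_independent[OF st(1)])
  then have face: "convex hull A face_of S" using st(3) by simp
  have inT: "convex hull A \<in> T" by (rule sc_face[OF assms(1) S(1) face])
  define den where "den = 1 - mu T x y"
  have den: "den > 0" using mu_lt1[OF assms] by (simp add: den_def)
  define w where "w v = (phi T x v - mm T x y v) / den" for v
  have w0: "w v = 0" if "v \<in> VV T - A" for v
    using that unfolding w_def A_def mm_def by auto
  have wnn: "0 \<le> w v" for v using den unfolding w_def mm_def by auto
  have rrw: "rr T (x,y) = (\<Sum>v\<in>VV T. w v *\<^sub>R v)" unfolding rr_def w_def den_def by simp
  have AV: "A \<subseteq> VV T" unfolding A_def by auto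
  have "(\<Sum>v\<in>VV T. w v *\<^sub>R v) = (\<Sum>v\<in>A. w v *\<^sub>R v)"
    by (rule sum.mono_neutral_right[OF fin AV]) (use w0 in auto)
  moreover have "sum w A = 1"
  proof -
    have "sum w A = sum w (VV T)"
      by (rule sum.mono_neutral_right[OF fin AV, symmetric]) (use w0 in auto)
    also have "\<dots> = (\<Sum>v\<in>VV T. phi T x v - mm T x y v) / den"
      unfolding w_def by (simp add: sum_divide_distrib)
    also have "\<dots> = (1 - mu T x y) / den" using px by (simp add: sum_subtractf mu_def)
    also have "\<dots> = 1" using den by (simp add: den_def)
    finally show ?thesis .
  qed
  ultimately have "rr T (x,y) \<in> convex hull A"
    unfolding convex_hull_finite[OF finA] mem_Collect_eq using rrw wnn by (intro exI[of _ w]) auto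
  then show ?thesis using inT Aind unfolding A_def by simp
qed

lemma rr_sep:
  fixes T :: "'b::euclidean_space set set"
  assumes "simplicial_complex T" "x \<in> \<Union>T" "y \<in> \<Union>T" "x \<noteq> y"
  shows "\<exists>S\<in>T. \<exists>S'\<in>T. S \<inter> S' = {} \<and> rr T (x,y) \<in> S \<and> rr T (y,x) \<in> S'"
proof -
  define A where "A = {v \<in> VV T. phi T y v < phi T x v}"
  define B where "B = {v \<in> VV T. phi T x v < phi T y v}"
  have a: "convex hull A \<in> T" "rr T (x,y) \<in> convex hull A" "\<not> affine_dependent A"
    using rr_in[OF assms] unfolding A_def by auto
  have b: "convex hull B \<in> T" "rr T (y,x) \<in> convex hull B" "\<not> affine_dependent B"
    using rr_in[OF assms(1,3,2) assms(4)[symmetric]] unfolding B_def by auto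
  obtain D where D: "D \<subseteq> verts (convex hull A)" "D \<subseteq> verts (convex hull B)"
      "convex hull A \<inter> convex hull B = convex hull D"
    using inter_hull[OF assms(1) a(1) b(1)] by blast
  have "D \<subseteq> A \<inter> B" using D(1,2) verts_hull[OF a(3)] verts_hull[OF b(3)] by auto
  moreover have "A \<inter> B = {}" unfolding A_def B_def by auto
  ultimately have "D = {}" by blast
  then have "convex hull A \<inter> convex hull B = {}" using D(3) by simp
  then show ?thesis using a b by blast
qed

lemma finite_min_pos:
  assumes "finite I" "\<forall>i\<in>I. \<exists>d>0. Q i d" "\<forall>i d d'. Q i d \<longrightarrow> 0 < d' \<longrightarrow> d' \<le> d \<longrightarrow> Q i d'"
  shows "\<exists>d>(0::real). \<forall>i\<in>I. Q i d"
  using assms(1,2)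
proof (induction I rule: finite_induct)
  case empty
  then show ?case by (intro exI[of _ 1]) auto
next
  case (insert i I)
  then obtain d1 where d1: "d1 > 0" "\<forall>j\<in>I. Q j d1" by auto
  obtain d2 where d2: "d2 > 0" "Q i d2" using insert.prems by auto
  show ?case
    using d1 d2 assms(3) by (intro exI[of _ "min d1 d2"]) (auto simp: min_le_iff_disj)
qed

lemma eps_sep:
  fixes T :: "'b::euclidean_space set set"
  assumes "simplicial_complex T"
  shows "\<exists>e>0. \<forall>S\<in>T. \<forall>S'\<in>T. S \<inter> S' = {} \<longrightarrow> (\<forall>a\<in>S. \<forall>b\<in>S'. e \<le> dist a b)"
proof -
  have finT: "finite T" using assms by (simp add: simplicial_complex_def)
  have cpt: "compact S" if "S \<in> T" for S
    using simplexT[OF assms that] by (metis compact_convex_hull finite_imp_compact)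
  have "\<exists>d>(0::real). \<forall>p\<in>T \<times> T. (fst p \<inter> snd p = {} \<longrightarrow> (\<forall>a\<in>fst p. \<forall>b\<in>snd p. d \<le> dist a b))"
  proof (rule finite_min_pos)
    show "finite (T \<times> T)" using finT by simp
    show "\<forall>p\<in>T \<times> T. \<exists>d>0. fst p \<inter> snd p = {} \<longrightarrow> (\<forall>a\<in>fst p. \<forall>b\<in>snd p. d \<le> dist a b)"
    proof
      fix p assume p: "p \<in> T \<times> T"
      show "\<exists>d>0. fst p \<inter> snd p = {} \<longrightarrow> (\<forall>a\<in>fst p. \<forall>b\<in>snd p. d \<le> dist a b)"
      proof (cases "fst p \<inter> snd p = {}")
        case True
        have "compact (fst p)" "compact (snd p)" using p cpt by auto
        then have c1: "compact (fst p)" and c2: "closed (snd p)" using compact_imp_closed by auto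
        from separate_compact_closed[OF c1 c2 True] obtain \<delta> where
          "\<delta> > 0" "\<forall>x\<in>fst p. \<forall>y\<in>snd p. \<delta> \<le> dist x y" by (elim exE conjE)
        then show ?thesis by (intro exI[of _ \<delta>]) simp
      next
        case False
        then show ?thesis by (intro exI[of _ 1]) auto
      qed
    qed
    show "\<forall>p d d'. (fst p \<inter> snd p = {} \<longrightarrow> (\<forall>a\<in>fst p. \<forall>b\<in>snd p. d \<le> dist a b)) \<longrightarrow> 0 < d' \<longrightarrow> d' \<le> d \<longrightarrow>
            (fst p \<inter> snd p = {} \<longrightarrow> (\<forall>a\<in>fst p. \<forall>b\<in>snd p. d' \<le> dist a b))"
    proof (intro allI impI ballI)
      fix p and d d' :: real and a b
      assume h: "fst p \<inter> snd p = {} \<longrightarrow> (\<forall>a\<in>fst p. \<forall>b\<in>snd p. d \<le> dist a b)" "0 < d'" "d' \<le> d"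
        "fst p \<inter> snd p = {}" "a \<in> fst p" "b \<in> snd p"
      then have "d \<le> dist a b" by blast
      then show "d' \<le> dist a b" using h(3) by linarith
    qed
  qed
  then obtain d where d: "d > 0" "\<forall>p\<in>T \<times> T. (fst p \<inter> snd p = {} \<longrightarrow> (\<forall>a\<in>fst p. \<forall>b\<in>snd p. d \<le> dist a b))"
    by blast
  have "\<forall>S\<in>T. \<forall>S'\<in>T. S \<inter> S' = {} \<longrightarrow> (\<forall>a\<in>S. \<forall>b\<in>S'. d \<le> dist a b)"
  proof (intro ballI impI)
    fix S S' a b assume h: "S \<in> T" "S' \<in> T" "S \<inter> S' = {}" "a \<in> S" "b \<in> S'"
    have "(S, S') \<in> T \<times> T" using h by simp
    then show "d \<le> dist a b" using d(2) h by fastforce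
  qed
  then show ?thesis using d(1) by blast
qed

lemma simplicial_push:
  fixes T :: "'b::euclidean_space set set"
  assumes "simplicial_complex T"
  shows "\<exists>e>0. \<exists>r. continuous_on (deleted_product (\<Union>T)) r \<and>
    (\<forall>x y. (x,y) \<in> deleted_product (\<Union>T) \<longrightarrow> r (x,y) \<in> \<Union>T \<and> e \<le> dist (r (x,y)) (r (y,x)))"
proof -
  obtain e where e: "e > 0" "\<forall>S\<in>T. \<forall>S'\<in>T. S \<inter> S' = {} \<longrightarrow> (\<forall>a\<in>S. \<forall>b\<in>S'. e \<le> dist a b)"
    using eps_sep[OF assms] by blast
  have "\<forall>x y. (x,y) \<in> deleted_product (\<Union>T) \<longrightarrow> rr T (x,y) \<in> \<Union>T \<and> e \<le> dist (rr T (x,y)) (rr T (y,x))"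
  proof (intro allI impI)
    fix x y assume "(x,y) \<in> deleted_product (\<Union>T)"
    then have xy: "x \<in> \<Union>T" "y \<in> \<Union>T" "x \<noteq> y" by (auto simp: deleted_product_def)
    obtain S S' where SS: "S\<in>T" "S'\<in>T" "S \<inter> S' = {}" "rr T (x,y) \<in> S" "rr T (y,x) \<in> S'"
      using rr_sep[OF assms xy] by blast
    show "rr T (x,y) \<in> \<Union>T \<and> e \<le> dist (rr T (x,y)) (rr T (y,x))"
      using SS e(2) by blast
  qed
  then show ?thesis using e(1) rr_cont[OF assms] by blast
qed

lemma polytope_times_interval:
  fixes S :: "'a::euclidean_space set"
  assumes "polytope S"
  shows "polytope (S \<times> {0..1::real})"
proof -
  obtain A where A: "finite A" "S = convex hull A" using assms unfolding polytope_def by blast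
  have I: "{0..1::real} = convex hull {0,1}"
    by (simp add: segment_convex_hull[symmetric] closed_segment_eq_real_ivl)
  have "S \<times> {0..1::real} = convex hull (A \<times> {0,1})"
    by (simp add: A(2) I convex_hull_Times)
  then show ?thesis using A(1) by (simp add: polytope_convex_hull)
qed

lemma cells_face:
  fixes G :: "'b::euclidean_space set set"
  assumes face: "\<forall>X \<in> G. \<forall>Y \<in> G. X \<inter> Y face_of X"
    and "D \<in> G" "D' \<in> G" "C face_of D" "C' face_of D'"
  shows "C \<inter> C' face_of C"
proof -
  have "C \<inter> C' face_of D \<inter> D'" by (rule face_of_Int_Int[OF assms(4,5)])
  moreover have "D \<inter> D' face_of D" using face assms(2,3) by simp
  ultimately have "C \<inter> C' face_of D" by (rule face_of_trans)
  moreover have "C \<subseteq> D" by (rule face_of_imp_subset[OF assms(4)])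
  ultimately show ?thesis by (meson face_of_subset inf_le1)
qed

lemma halfspace_face:
  fixes D :: "'b::euclidean_space set"
  assumes "convex D" "\<forall>x\<in>D. \<forall>y\<in>D. a \<bullet> x \<le> b \<and> a \<bullet> y \<le> b \<or> a \<bullet> x \<ge> b \<and> a \<bullet> y \<ge> b"
  shows "D \<inter> {x. a \<bullet> x \<le> b} face_of D"
proof (cases "\<forall>y\<in>D. a \<bullet> y \<le> b")
  case True
  then have "D \<inter> {x. a \<bullet> x \<le> b} = D" by auto
  then show ?thesis using face_of_refl[OF assms(1)] by simp
next
  case False
  then obtain y1 where y1: "y1 \<in> D" "a \<bullet> y1 > b" by (auto simp: not_le)
  have ge: "\<And>y. y \<in> D \<Longrightarrow> a \<bullet> y \<ge> b"
  proof -
    fix y assume "y \<in> D"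
    then have "a \<bullet> y1 \<le> b \<and> a \<bullet> y \<le> b \<or> a \<bullet> y1 \<ge> b \<and> a \<bullet> y \<ge> b" using assms(2) y1(1) by blast
    then show "a \<bullet> y \<ge> b" using y1(2) by linarith
  qed
  have "D \<inter> {x. a \<bullet> x \<le> b} = D \<inter> {x. a \<bullet> x = b}" using ge by force
  then show ?thesis using face_of_Int_supporting_hyperplane_ge[OF assms(1) ge] by simp
qed

lemma triangulate_union:
  fixes F :: "'b::euclidean_space set set"
  assumes finF: "finite F" and polyF: "\<forall>S\<in>F. polytope S"
  shows "\<exists>T. simplicial_complex T \<and> \<Union>T = \<Union>F"
proof -
  have "bounded (\<Union>F)" using finF polyF by (simp add: bounded_Union polytope_imp_bounded)
  then obtain c where Kc: "\<Union>F \<subseteq> cbox (-c) c" using bounded_subset_cbox_symmetric by blast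
  define K where "K = cbox (-c) c"
  have "\<forall>S\<in>F. \<exists>H. finite H \<and> S = \<Inter>H \<and> (\<forall>h\<in>H. \<exists>a b. a \<noteq> 0 \<and> h = {x. a \<bullet> x \<le> b})"
    using polyF polytope_imp_polyhedron unfolding polyhedron_def by blast
  then obtain HH where HH: "\<And>S. S \<in> F \<Longrightarrow> finite (HH S) \<and> S = \<Inter>(HH S) \<and>
      (\<forall>h\<in>HH S. \<exists>a b. a \<noteq> 0 \<and> h = {x. a \<bullet> x \<le> b})"
    by metis
  define ab where "ab h = (SOME p. h = {x. fst p \<bullet> x \<le> snd p})" for h :: "'b set"
  have abh: "h = {x. fst (ab h) \<bullet> x \<le> snd (ab h)}" if Sh: "S \<in> F" "h \<in> HH S" for S h
  proof -
    obtain a b where "h = {x. a \<bullet> x \<le> b}" using HH[OF Sh(1)] Sh(2) by blast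
    then have "\<exists>p. h = {x. fst p \<bullet> x \<le> snd p}" by (intro exI[of _ "(a,b)"]) simp
    then show ?thesis unfolding ab_def by (rule someI_ex)
  qed
  define I where "I = ab ` (\<Union>S\<in>F. HH S)"
  have finI: "finite I" unfolding I_def using finF HH by auto
  have polyK: "polytope K" unfolding K_def by (rule polytope_interval)
  have convK: "convex K" unfolding K_def by (rule convex_box)
  obtain G where G: "\<Union>G = \<Union>{K}" "finite G"
      "\<forall>C \<in> {K}. \<forall>x \<in> C. \<exists>D. D \<in> G \<and> x \<in> D \<and> D \<subseteq> C"
      "\<forall>X \<in> G. polytope X"
      "\<forall>X \<in> G. \<forall>Y \<in> G. X \<inter> Y face_of X"
      "\<forall>X \<in> G. \<forall>x \<in> X. \<forall>y \<in> X. \<forall>a b. (a,b) \<in> I \<longrightarrow> a \<bullet> x \<le> b \<and> a \<bullet> y \<le> b \<or> a \<bullet> x \<ge> b \<and> a \<bullet> y \<ge> b"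
  proof -
    have "\<exists>\<G>. \<Union>\<G> = \<Union>{K} \<and> finite \<G> \<and>
                 (\<forall>C \<in> \<G>. \<exists>D. D \<in> {K} \<and> C \<subseteq> D) \<and>
                 (\<forall>C \<in> {K}. \<forall>x \<in> C. \<exists>D. D \<in> \<G> \<and> x \<in> D \<and> D \<subseteq> C) \<and>
                 (\<forall>X \<in> \<G>. polytope X) \<and>
                 (\<forall>X \<in> \<G>. aff_dim X \<le> aff_dim K) \<and>
                 (\<forall>X \<in> \<G>. \<forall>Y \<in> \<G>. X \<inter> Y face_of X) \<and>
                 (\<forall>X \<in> \<G>. \<forall>x \<in> X. \<forall>y \<in> X. \<forall>a b.
                          (a,b) \<in> I \<longrightarrow> a \<bullet> x \<le> b \<and> a \<bullet> y \<le> b \<or>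
                                        a \<bullet> x \<ge> b \<and> a \<bullet> y \<ge> b)"
      by (rule cell_subdivision_lemma[OF _ _ _ _ finI]) (use polyK face_of_refl[OF convK] in auto)
    then show ?thesis using that by (elim exE conjE) blast
  qed
  define T0 where "T0 = {C. \<exists>D\<in>G. C face_of D \<and> C \<subseteq> \<Union>F}"
  have finT0: "finite T0"
  proof -
    have "T0 \<subseteq> (\<Union>D\<in>G. {C. C face_of D})" unfolding T0_def by blast
    moreover have "finite (\<Union>D\<in>G. {C. C face_of D})"
      using G(2,4) finite_polytope_faces by blast
    ultimately show ?thesis using finite_subset by blast
  qed
  have polyT0: "polytope C" if "C \<in> T0" for C
    using that G(4) face_of_polytope_polytope unfolding T0_def by blast
  have faceT0: "C1 \<inter> C2 face_of C1" if CC: "C1 \<in> T0" "C2 \<in> T0" for C1 C2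
  proof -
    obtain D1 where D1: "D1 \<in> G" "C1 face_of D1" using CC(1) unfolding T0_def by blast
    obtain D2 where D2: "D2 \<in> G" "C2 face_of D2" using CC(2) unfolding T0_def by blast
    show ?thesis by (rule cells_face[OF G(5) D1(1) D2(1) D1(2) D2(2)])
  qed
  have UT0: "\<Union>T0 = \<Union>F"
  proof
    show "\<Union>T0 \<subseteq> \<Union>F" unfolding T0_def by blast
  next
    show "\<Union>F \<subseteq> \<Union>T0"
    proof
      fix x assume "x \<in> \<Union>F"
      then obtain S where S: "S \<in> F" "x \<in> S" by blast
      have "x \<in> K" using Kc S unfolding K_def by blast
      then obtain D where D: "D \<in> G" "x \<in> D" using G(3) by blast
      have convD: "convex D" using G(4) D(1) polytope_imp_convex by blast
      have hf: "D \<inter> h face_of D" if hH: "h \<in> HH S" for h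
      proof -
        have h: "h = {x. fst (ab h) \<bullet> x \<le> snd (ab h)}" by (rule abh[OF S(1) hH])
        have "ab h \<in> I" unfolding I_def using S(1) hH by blast
        then have "(fst (ab h), snd (ab h)) \<in> I" by simp
        note abI = this
        note P = bspec[OF G(6) D(1)]
        have "\<forall>x\<in>D. \<forall>y\<in>D. fst (ab h) \<bullet> x \<le> snd (ab h) \<and> fst (ab h) \<bullet> y \<le> snd (ab h) \<or>
               fst (ab h) \<bullet> x \<ge> snd (ab h) \<and> fst (ab h) \<bullet> y \<ge> snd (ab h)"
        proof (intro ballI)
          fix x y assume xy: "x \<in> D" "y \<in> D"
          show "fst (ab h) \<bullet> x \<le> snd (ab h) \<and> fst (ab h) \<bullet> y \<le> snd (ab h) \<or>
               fst (ab h) \<bullet> x \<ge> snd (ab h) \<and> fst (ab h) \<bullet> y \<ge> snd (ab h)"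
            by (rule P[rule_format, OF xy abI])
        qed
        then have "D \<inter> {x. fst (ab h) \<bullet> x \<le> snd (ab h)} face_of D"
          by (rule halfspace_face[OF convD])
        then show ?thesis using h by simp
      qed
      define H where "H = HH S"
      have SH: "S = \<Inter>H" unfolding H_def using HH[OF S(1)] by (elim conjE)
      have eq: "D \<inter> S = \<Inter>(insert D ((\<lambda>h. D \<inter> h) ` H))"
        unfolding SH by auto
      have "D \<inter> S face_of D"
        unfolding eq by (rule face_of_Inter) (use hf face_of_refl[OF convD] in \<open>auto simp: H_def\<close>)
      moreover have "D \<inter> S \<subseteq> \<Union>F" using S(1) by blast
      ultimately have "D \<inter> S \<in> T0" unfolding T0_def mem_Collect_eq by (intro bexI[of _ D] conjI D(1))
      then show "x \<in> \<Union>T0" by (rule UnionI) (use D(2) S(2) in simp)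
    qed
  qed
  obtain T where T: "simplicial_complex T" "\<Union>T = \<Union>T0"
  proof (rule simplicial_subdivision_of_cell_complex[of T0])
    show "finite T0" by (rule finT0)
    show "\<And>C. C \<in> T0 \<Longrightarrow> polytope C" by (rule polyT0)
    show "\<And>C1 C2. C1 \<in> T0 \<Longrightarrow> C2 \<in> T0 \<Longrightarrow> C1 \<inter> C2 face_of C1" by (rule faceT0)
  next
    fix T' assume "simplicial_complex T'" "\<Union>T' = \<Union>T0"
    then show thesis by (rule that)
  qed
  show ?thesis using T UT0 by (intro exI[of _ T]) simp
qed

lemma pos_inf_bound:
  fixes g :: "'c::metric_space \<Rightarrow> real"
  assumes "compact K" "continuous_on K g" "\<forall>z\<in>K. 0 < g z"
  shows "\<exists>m>0. \<forall>z\<in>K. m \<le> g z"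
proof (cases "K = {}")
  case True
  then show ?thesis by (intro exI[of _ 1]) simp
next
  case False
  obtain z0 where z0: "z0 \<in> K" "\<forall>z\<in>K. g z0 \<le> g z"
    using continuous_attains_inf[OF assms(1) False assms(2)] by (elim bexE) blast
  show ?thesis using z0 assms(3) by (intro exI[of _ "g z0"]) auto
qed

lemma compact_Nplus: "compact Nplus"
proof -
  have "(\<lambda>k::nat. 1 / (real k + 1)) = (\<lambda>n. inverse (real (Suc n)))"
    by (simp add: divide_inverse add.commute)
  then have "(\<lambda>k::nat. 1 / (real k + 1)) \<longlonglongrightarrow> 0"
    using LIMSEQ_inverse_real_of_nat by simp
  then show ?thesis unfolding Nplus_def by (rule compact_sequence_with_limit)
qed

lemma dist_pair_le:
  fixes p q :: "'a::real_normed_vector" and s t :: real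
  shows "dist (p, s) (q, t) \<le> dist p q + \<bar>s - t\<bar>"
proof -
  have "dist (p, s) (q, t) = norm (p - q, s - t)" by (simp add: dist_norm)
  also have "\<dots> \<le> norm (p - q) + norm (s - t)" by (rule norm_Pair_le)
  finally show ?thesis by (simp add: dist_norm)
qed

definition theta :: "real \<Rightarrow> real \<Rightarrow> real" where
  "theta e z = min 1 (max 0 ((4 / e) * z - 1))"

lemma theta_props:
  assumes "e > 0"
  shows "z \<ge> e/2 \<Longrightarrow> theta e z = 1" "z \<le> e/4 \<Longrightarrow> theta e z = 0" "0 \<le> theta e z" "theta e z \<le> 1"
proof -
  show "z \<ge> e/2 \<Longrightarrow> theta e z = 1"
  proof -
    assume "z \<ge> e/2"
    then have "(4 / e) * z \<ge> 2" using assms by (simp add: field_simps)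
    then show ?thesis unfolding theta_def by simp
  qed
  show "z \<le> e/4 \<Longrightarrow> theta e z = 0"
  proof -
    assume "z \<le> e/4"
    then have "(4 / e) * z \<le> 1" using assms by (simp add: field_simps)
    then show ?thesis unfolding theta_def by simp
  qed
  show "0 \<le> theta e z" "theta e z \<le> 1" unfolding theta_def by auto
qed

lemma continuous_theta: "continuous_on UNIV (theta e)"
  unfolding theta_def by (intro continuous_intros) 

theorem lemma1:
  fixes X :: "'a::euclidean_space set" and E :: "'n::euclidean_space set"
  assumes "compact_polyhedron X"
    and "(X \<times> Nplus) homeomorphic E"
  shows "\<exists>g :: ('a \<times> real) \<times> ('a \<times> real) \<Rightarrow> 'n. Z2_map_to_sphere (X \<times> {0..1::real}) g"
proof -
  obtain \<T> where \<T>: "finite \<T>" "\<forall>S\<in>\<T>. polytope S" "X = \<Union>\<T>"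
    using assms(1) unfolding compact_polyhedron_def by blast
  define P where "P = X \<times> {0..1::real}"
  have PU: "P = \<Union>((\<lambda>S. S \<times> {0..1::real}) ` \<T>)" unfolding P_def \<T>(3) by blast
  have "\<exists>T. simplicial_complex T \<and> \<Union>T = \<Union>((\<lambda>S. S \<times> {0..1::real}) ` \<T>)"
    by (rule triangulate_union) (use \<T>(1,2) polytope_times_interval in auto)
  then obtain T :: "('a \<times> real) set set" where T: "simplicial_complex T" "\<Union>T = P"
    using PU by (elim exE conjE) simp
  have "\<exists>e>0. \<exists>r. continuous_on (deleted_product (\<Union>T)) r \<and>
    (\<forall>x y. (x,y) \<in> deleted_product (\<Union>T) \<longrightarrow> r (x,y) \<in> \<Union>T \<and> e \<le> dist (r (x,y)) (r (y,x)))"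
    by (rule simplicial_push[OF T(1)])
  then obtain \<epsilon> r where er: "\<epsilon> > 0" "continuous_on (deleted_product P) r"
      "\<forall>x y. (x,y) \<in> deleted_product P \<longrightarrow> r (x,y) \<in> P \<and> \<epsilon> \<le> dist (r (x,y)) (r (y,x))"
    unfolding T(2) by (elim exE conjE) simp
  define dp where "dp = deleted_product P"
  have swap: "(snd z, fst z) \<in> dp" if "z \<in> dp" for z
    using that unfolding dp_def deleted_product_def by auto
  have rin: "r z \<in> P" if "z \<in> dp" for z
  proof -
    have "(fst z, snd z) \<in> deleted_product P" using that by (simp add: dp_def)
    from er(3)[rule_format, OF this] show ?thesis by simp
  qed
  have rsep: "\<epsilon> \<le> dist (r z) (r (snd z, fst z))" if "z \<in> dp" for z
  proof -
    have "(fst z, snd z) \<in> deleted_product P" using that by (simp add: dp_def)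
    from er(3)[rule_format, OF this] show ?thesis by simp
  qed
  obtain h k where hk: "homeomorphism (X \<times> Nplus) E h k"
    using assms(2) unfolding homeomorphic_def by blast
  have hcont: "continuous_on (X \<times> Nplus) h" and hinj: "\<forall>x\<in>X \<times> Nplus. k (h x) = x"
    using hk unfolding homeomorphism_def by auto
  have hneq: "h u \<noteq> h v" if "u \<in> X \<times> Nplus" "v \<in> X \<times> Nplus" "u \<noteq> v" for u v
    using hinj that by metis
  have cX: "compact X" unfolding \<T>(3) by (rule compact_Union) (use \<T>(1,2) polytope_imp_compact in auto)
  have cXN: "compact (X \<times> Nplus)" by (rule compact_Times[OF cX compact_Nplus])
  have N0: "0 \<in> Nplus" unfolding Nplus_def by simp
  define K2 where "K2 = (X \<times> X) \<inter> {z. \<epsilon>/2 \<le> dist (fst z) (snd z)}"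
  have cK2: "compact K2" unfolding K2_def
    by (intro compact_Int_closed compact_Times cX closed_Collect_le continuous_intros)
  have "\<exists>m>0. \<forall>z\<in>K2. m \<le> dist (h (fst z, 0)) (h (snd z, 0))"
  proof (rule pos_inf_bound[OF cK2])
    have c1: "continuous_on K2 (\<lambda>z. h (fst z, 0))"
      by (rule continuous_on_compose2[OF hcont]) (auto intro!: continuous_intros simp: K2_def N0)
    have c2: "continuous_on K2 (\<lambda>z. h (snd z, 0))"
      by (rule continuous_on_compose2[OF hcont]) (auto intro!: continuous_intros simp: K2_def N0)
    show "continuous_on K2 (\<lambda>z. dist (h (fst z, 0)) (h (snd z, 0)))"
      by (intro continuous_on_dist c1 c2)
    show "\<forall>z\<in>K2. 0 < dist (h (fst z, 0)) (h (snd z, 0))"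
    proof
      fix z assume z: "z \<in> K2"
      then have "fst z \<noteq> snd z" using er(1) unfolding K2_def by auto
      moreover have "(fst z, 0) \<in> X \<times> Nplus" "(snd z, 0) \<in> X \<times> Nplus" using z N0 unfolding K2_def by auto
      ultimately have "h (fst z, 0) \<noteq> h (snd z, 0)" using hneq by simp
      then show "0 < dist (h (fst z, 0)) (h (snd z, 0))" by simp
    qed
  qed
  then obtain \<mu> where \<mu>: "\<mu> > 0" "\<forall>z\<in>K2. \<mu> \<le> dist (h (fst z, 0)) (h (snd z, 0))"
    by (elim exE conjE) simp
  have uc: "uniformly_continuous_on (X \<times> Nplus) h" by (rule compact_uniformly_continuous[OF hcont cXN])
  have mu2: "\<mu>/2 > 0" using \<mu>(1) by simp
  have "\<exists>d>0. \<forall>x\<in>X \<times> Nplus. \<forall>x'\<in>X \<times> Nplus. dist x' x < d \<longrightarrow> dist (h x') (h x) < \<mu>/2"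
    using uc mu2 unfolding uniformly_continuous_on_def by blast
  then obtain \<delta> where \<delta>: "\<delta> > 0" "\<forall>x\<in>X \<times> Nplus. \<forall>x'\<in>X \<times> Nplus. dist x' x < \<delta> \<longrightarrow> dist (h x') (h x) < \<mu>/2"
    by blast
  obtain kk :: nat where kk: "inverse (real (Suc kk)) < \<delta>" using reals_Archimedean[OF \<delta>(1)] by blast
  define b where "b = 1 / (real kk + 1)"
  have bpos: "b > 0" unfolding b_def by simp
  have bd: "b < \<delta>" using kk unfolding b_def by (simp add: divide_inverse add.commute)
  have bN: "b \<in> Nplus" unfolding Nplus_def b_def by simp
  have close: "dist (h (p, b)) (h (p, 0)) < \<mu>/2" if "p \<in> X" for p
  proof -
    have "dist (p, b) (p, 0) = b" using bpos by (simp add: dist_Pair_Pair)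
    then have "dist (p, b) (p, 0) < \<delta>" using bd by simp
    moreover have "(p, b) \<in> X \<times> Nplus" "(p, 0) \<in> X \<times> Nplus" using that bN N0 by auto
    ultimately show ?thesis using \<delta>(2) by blast
  qed
  define D where "D z = h (fst (r z), 0) - h (fst (r (snd z, fst z)), 0)
      + theta \<epsilon> (snd (r z) - snd (r (snd z, fst z))) *\<^sub>R (h (fst (r z), b) - h (fst (r z), 0))
      - theta \<epsilon> (snd (r (snd z, fst z)) - snd (r z)) *\<^sub>R (h (fst (r (snd z, fst z)), b) - h (fst (r (snd z, fst z)), 0))"
    for z
  have Dswap: "D (snd z, fst z) = - D z" for z
    unfolding D_def by (simp add: algebra_simps)
  have Dnz: "D z \<noteq> 0" if zdp: "z \<in> dp" for z
  proof -
    obtain p s where ps: "r z = (p, s)" by fastforce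
    obtain q t where qt: "r (snd z, fst z) = (q, t)" by fastforce
    have pX: "p \<in> X" and qX: "q \<in> X"
      using rin[OF zdp] rin[OF swap[OF zdp]] ps qt unfolding P_def by auto
    have sep: "\<epsilon> \<le> dist (p, s) (q, t)" using rsep[OF zdp] ps qt by simp
    have Dz: "D z = h (p, 0) - h (q, 0) + theta \<epsilon> (s - t) *\<^sub>R (h (p, b) - h (p, 0))
        - theta \<epsilon> (t - s) *\<^sub>R (h (q, b) - h (q, 0))"
      unfolding D_def ps qt by simp
    have th: "\<And>x. x \<ge> \<epsilon>/2 \<Longrightarrow> theta \<epsilon> x = 1" "\<And>x. x \<le> \<epsilon>/4 \<Longrightarrow> theta \<epsilon> x = 0"
      "\<And>x. 0 \<le> theta \<epsilon> x" "\<And>x. theta \<epsilon> x \<le> 1"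
      using theta_props[OF er(1)] by auto
    have pb: "(p, b) \<in> X \<times> Nplus" "(q, b) \<in> X \<times> Nplus" "(p, 0) \<in> X \<times> Nplus" "(q, 0) \<in> X \<times> Nplus"
      using pX qX bN N0 by auto
    consider "s - t \<ge> \<epsilon>/2" | "t - s \<ge> \<epsilon>/2" | "\<bar>s - t\<bar> < \<epsilon>/2" by linarith
    then show ?thesis
    proof cases
      case 1
      then have "theta \<epsilon> (s - t) = 1" "theta \<epsilon> (t - s) = 0" using th er(1) by auto
      then have "D z = h (p, b) - h (q, 0)" unfolding Dz by simp
      moreover have "h (p, b) \<noteq> h (q, 0)" using hneq[OF pb(1) pb(4)] bpos by simp
      ultimately show ?thesis by simp
    next
      case 2
      then have "theta \<epsilon> (s - t) = 0" "theta \<epsilon> (t - s) = 1" using th er(1) by auto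
      then have "D z = h (p, 0) - h (q, b)" unfolding Dz by simp
      moreover have "h (p, 0) \<noteq> h (q, b)" using hneq[OF pb(3) pb(2)] bpos by simp
      ultimately show ?thesis by simp
    next
      case 3
      have "dist (p, s) (q, t) \<le> dist p q + \<bar>s - t\<bar>" by (rule dist_pair_le)
      then have "\<epsilon>/2 \<le> dist p q" using sep 3 by linarith
      then have "(p, q) \<in> K2" unfolding K2_def using pX qX by simp
      from bspec[OF \<mu>(2) this] have big: "\<mu> \<le> norm (h (p, 0) - h (q, 0))" by (simp add: dist_norm)
      define e where "e = theta \<epsilon> (s - t) *\<^sub>R (h (p, b) - h (p, 0)) - theta \<epsilon> (t - s) *\<^sub>R (h (q, b) - h (q, 0))"
      have cp: "norm (h (p, b) - h (p, 0)) < \<mu>/2" using close[OF pX] by (simp add: dist_norm)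
      have cq: "norm (h (q, b) - h (q, 0)) < \<mu>/2" using close[OF qX] by (simp add: dist_norm)
      have small: "norm e < \<mu>/2"
      proof (cases "s \<ge> t")
        case True
        then have "theta \<epsilon> (t - s) = 0" using th er(1) by auto
        then have "norm e = theta \<epsilon> (s - t) * norm (h (p, b) - h (p, 0))"
          unfolding e_def using th by simp
        also have "\<dots> \<le> norm (h (p, b) - h (p, 0))"
          using th by (simp add: mult_left_le_one_le)
        finally show ?thesis using cp by linarith
      next
        case False
        then have "theta \<epsilon> (s - t) = 0" using th er(1) by auto
        then have "norm e = theta \<epsilon> (t - s) * norm (h (q, b) - h (q, 0))"
          unfolding e_def using th by simp
        also have "\<dots> \<le> norm (h (q, b) - h (q, 0))"
          using th by (simp add: mult_left_le_one_le)
        finally show ?thesis using cq by linarith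
      qed
      have "D z = (h (p, 0) - h (q, 0)) + e" unfolding Dz e_def by (simp add: algebra_simps)
      then have nD: "norm (D z) = norm ((h (p, 0) - h (q, 0)) + e)" by simp
      have "norm (h (p, 0) - h (q, 0)) \<le> norm ((h (p, 0) - h (q, 0)) + e) + norm e"
        by (metis add_diff_cancel norm_triangle_ineq4)
      then have "\<mu>/2 < norm (D z)" using big small nD by linarith
      then show ?thesis using \<mu>(1) by auto
    qed
  qed
  define g where "g z = (1 / norm (D z)) *\<^sub>R D z" for z
  have c1: "continuous_on dp r" using er(2) by (simp add: dp_def)
  have c2: "continuous_on dp (\<lambda>z. r (snd z, fst z))"
  proof -
    have img: "(\<lambda>z. (snd z, fst z)) ` dp \<subseteq> dp" using swap by blast
    show ?thesis by (rule continuous_on_compose2[OF c1 _ img]) (intro continuous_intros)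
  qed
  have fX1: "fst (r z) \<in> X" if "z \<in> dp" for z using rin[OF that] unfolding P_def by auto
  have fX2: "fst (r (snd z, fst z)) \<in> X" if "z \<in> dp" for z using rin[OF swap[OF that]] unfolding P_def by auto
  have ch1: "continuous_on dp (\<lambda>z. h (fst (r z), c))" if "c \<in> Nplus" for c
  proof -
    have img: "(\<lambda>z. (fst (r z), c)) ` dp \<subseteq> X \<times> Nplus" using fX1 that by blast
    have cc: "continuous_on dp (\<lambda>z. (fst (r z), c))" by (intro continuous_intros c1)
    show ?thesis by (rule continuous_on_compose2[OF hcont cc img])
  qed
  have ch2: "continuous_on dp (\<lambda>z. h (fst (r (snd z, fst z)), c))" if "c \<in> Nplus" for c
  proof -
    have img: "(\<lambda>z. (fst (r (snd z, fst z)), c)) ` dp \<subseteq> X \<times> Nplus" using fX2 that by blast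
    have cc: "continuous_on dp (\<lambda>z. (fst (r (snd z, fst z)), c))" by (intro continuous_intros c2)
    show ?thesis by (rule continuous_on_compose2[OF hcont cc img])
  qed
  have ct1: "continuous_on dp (\<lambda>z. theta \<epsilon> (snd (r z) - snd (r (snd z, fst z))))"
    by (rule continuous_on_compose2[OF continuous_theta]) (auto intro!: continuous_intros c1 c2)
  have ct2: "continuous_on dp (\<lambda>z. theta \<epsilon> (snd (r (snd z, fst z)) - snd (r z)))"
    by (rule continuous_on_compose2[OF continuous_theta]) (auto intro!: continuous_intros c1 c2)
  have cD: "continuous_on dp D"
    unfolding D_def by (intro continuous_intros ch1 ch2 ct1 ct2 N0 bN)
  have cg: "continuous_on dp g"
    unfolding g_def by (intro continuous_intros cD) (use Dnz in auto)
  have "Z2_map_to_sphere (X \<times> {0..1::real}) g"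
    unfolding Z2_map_to_sphere_def P_def[symmetric] dp_def[symmetric]
  proof (intro conjI allI impI)
    show "continuous_on dp g" by (rule cg)
    show "g ` dp \<subseteq> sphere 0 1"
    proof
      fix y assume "y \<in> g ` dp"
      then obtain z where z: "z \<in> dp" "y = g z" by blast
      have "norm (g z) = 1" using Dnz[OF z(1)] unfolding g_def by simp
      then show "y \<in> sphere 0 1" using z(2) by simp
    qed
    fix p q assume "(p, q) \<in> dp"
    have "D (q, p) = - D (p, q)" using Dswap[of "(p,q)"] by simp
    then show "g (q, p) = - g (p, q)" unfolding g_def by simp
  qed
  then show ?thesis by blast
qed

end
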